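(* Let $q\in L_1[0,\pi]$ with $C_0=0$ and suppose $q\in E$, i.e. $C_n=O(1/n)$ as $n\to\infty$. Then $S_1(n,q)=O(n^{-2})$ as $n\to\infty$, where \[ S_1(n,q)=\sum_{\substack{k,l\in\mathbb{Z}\\ k,\,k+l\neq0,-2n}}\frac{C_kC_lC_{-k-l}}{k(k+l)} . \]
   Context: $q$ is a complex-valued summable function on $[0,\pi]$; $C_k=\frac{1}{\pi}\int_0^\pi q(x)\cos kx\,dx$ for $k\in\mathbb{Z}$ (so $C_{-k}=C_k$), and it is assumed that $C_0=0$. $E$ is the set of such $q$ with $C_n=O(1/n)$ as $n\to\infty$. $n$ is a positive integer. *)

theory Defs
  imports "HOL-Analysis.Analysis" "HOL-Library.Landau_Symbols"
begin

definition cosC :: "(real \<Rightarrow> complex) \<Rightarrow> int \<Rightarrow> complex" where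
  "cosC q k = complex_of_real (1 / pi) *
     integral {0..pi} (\<lambda>x. q x * complex_of_real (cos (real_of_int k * x)))"

definition S1_index :: "nat \<Rightarrow> (int \<times> int) set" where
  "S1_index n = {(k, l). k \<noteq> 0 \<and> k \<noteq> - 2 * int n \<and> k + l \<noteq> 0 \<and> k + l \<noteq> - 2 * int n}"

definition S1_term :: "(real \<Rightarrow> complex) \<Rightarrow> int \<times> int \<Rightarrow> complex" where
  "S1_term q kl = (case kl of (k, l) \<Rightarrow>
     cosC q k * cosC q l * cosC q (- k - l) / (of_int k * of_int (k + l)))"

definition S1 :: "(real \<Rightarrow> complex) \<Rightarrow> nat \<Rightarrow> complex" where
  "S1 q n = infsum (S1_term q) (S1_index n)"

end

theory Submission
  imports Defs
begin

lemma cosC_even: "cosC q (- k) = cosC q k"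
  unfolding cosC_def by simp

definition hh :: "int \<Rightarrow> real" where "hh k = 1 / (of_int k)^2"

lemma hh_nonneg: "hh k \<ge> 0" by (simp add: hh_def)

lemma hh_summable: "hh summable_on {k. k \<noteq> 0}"
proof -
  have s: "summable (\<lambda>n::nat. inverse (real n ^ 2))"
    by (rule inverse_power_summable) simp
  have "(\<lambda>n::nat. hh (int n)) summable_on UNIV"
    using s by (subst summable_on_UNIV_nonneg_real_iff) (auto simp: hh_def hh_nonneg divide_inverse)
  hence a: "hh summable_on (int ` UNIV)"
    by (subst summable_on_reindex) (auto simp: o_def)
  have "(\<lambda>n::nat. hh (- int n)) summable_on UNIV"
    using s by (subst summable_on_UNIV_nonneg_real_iff) (auto simp: hh_def hh_nonneg divide_inverse)
  hence b: "hh summable_on ((\<lambda>n. - int n) ` UNIV)"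
    by (subst summable_on_reindex) (auto simp: o_def inj_on_def)
  have "hh summable_on (int ` UNIV \<union> (\<lambda>n. - int n) ` UNIV)"
    using a b by (rule summable_on_union)
  moreover have "{k. k \<noteq> 0} \<subseteq> int ` UNIV \<union> (\<lambda>n. - int n) ` UNIV"
  proof
    fix k :: int assume "k \<in> {k. k \<noteq> 0}"
    show "k \<in> int ` UNIV \<union> (\<lambda>n. - int n) ` UNIV"
    proof (cases "k \<ge> 0")
      case True thus ?thesis by (metis UnI1 nonneg_int_cases rangeI)
    next
      case False
      hence "k = - int (nat (-k))" by simp
      thus ?thesis by blast
    qed
  qed
  ultimately show ?thesis by (rule summable_on_subset_banach)
qed

lemma hh_prod_summable:
  "(\<lambda>p. hh (fst p) * hh (snd p)) summable_on ({k. k \<noteq> 0} \<times> {k. k \<noteq> 0})"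
proof (rule summable_on_SigmaI[where g = "\<lambda>x. hh x * infsum hh {k. k \<noteq> 0}"])
  fix x :: int assume "x \<in> {k. k \<noteq> 0}"
  show "((\<lambda>y. hh (fst (x, y)) * hh (snd (x, y))) has_sum hh x * infsum hh {k. k \<noteq> 0}) {k. k \<noteq> 0}"
    using has_sum_cmult_right[OF hh_summable[unfolded summable_iff_has_sum_infsum]] by simp
next
  show "(\<lambda>x. hh x * infsum hh {k. k \<noteq> 0}) summable_on {k. k \<noteq> 0}"
    using summable_on_cmult_right[OF hh_summable, of "infsum hh {k. k \<noteq> 0}"]
    by (simp add: mult.commute)
next
  fix x y show "0 \<le> hh (fst (x, y)) * hh (snd (x, y))" by (simp add: hh_nonneg)
qed

lemma coef_bound:
  assumes "cosC q 0 = 0"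
    and "(\<lambda>n::nat. norm (cosC q (int n))) \<in> O(\<lambda>n. 1 / real n)"
  obtains M where "M \<ge> 0" "\<And>k. k \<noteq> 0 \<Longrightarrow> norm (cosC q k) \<le> M / \<bar>of_int k\<bar>"
proof -
  obtain c where c: "c > 0"
    "eventually (\<lambda>n. norm (norm (cosC q (int n))) \<le> c * norm (1 / real n)) sequentially"
    using assms(2) by (elim landau_o.bigE)
  then obtain N where N: "\<And>n. n \<ge> N \<Longrightarrow> norm (cosC q (int n)) \<le> c / real n"
    unfolding eventually_sequentially by auto
  define M where "M = max c (Max ((\<lambda>n. norm (cosC q (int n)) * real n) ` {..N}))"
  have Mc: "c \<le> M" unfolding M_def by simp
  have Mm: "norm (cosC q (int n)) * real n \<le> M" if "n \<le> N" for n
    unfolding M_def using that by (intro max.coboundedI2 Max_ge) auto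
  have nat_b: "norm (cosC q (int n)) \<le> M / real n" if "n > 0" for n
  proof (cases "n \<ge> N")
    case True
    hence "norm (cosC q (int n)) \<le> c / real n" by (rule N)
    also have "\<dots> \<le> M / real n" using Mc that by (simp add: divide_right_mono)
    finally show ?thesis .
  next
    case False
    hence "norm (cosC q (int n)) * real n \<le> M" using Mm by simp
    thus ?thesis using that by (simp add: field_simps)
  qed
  show ?thesis
  proof
    show "M \<ge> 0" using Mc c by simp
  next
    fix k :: int assume k: "k \<noteq> 0"
    show "norm (cosC q k) \<le> M / \<bar>of_int k\<bar>"
    proof (cases "k > 0")
      case True
      then obtain n where "k = int n" "n > 0" by (metis pos_int_cases)
      thus ?thesis using nat_b by simp
    next
      case False
      then obtain n where n: "k = - int n" "n > 0" using k
        by (metis linorder_neqE_linordered_idom neg_int_cases)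
      thus ?thesis using nat_b[of n] by (simp add: cosC_even)
    qed
  qed
qed


lemma F_eq:
  assumes "cosC q 0 = 0"
  shows "S1_term q (k, m - k) = cosC q k * cosC q (m - k) * cosC q m / (of_int k * of_int m)"
  unfolding S1_term_def using cosC_even[of q m] by simp

lemma cyc_zero:
  fixes k m :: int and q :: "real \<Rightarrow> complex"
  assumes "k \<noteq> 0" "m \<noteq> 0" "m \<noteq> k"
  defines "F \<equiv> \<lambda>p. S1_term q (fst p, snd p - fst p)"
  shows "F (k, m) + F (m - k, - k) + F (- m, k - m) = 0"
proof -
  have e1: "F (k, m) = cosC q k * cosC q (m - k) * cosC q m / (of_int k * of_int m)"
    unfolding F_def S1_term_def using cosC_even[of q m] by simp
  have e2: "F (m - k, - k) = cosC q k * cosC q (m - k) * cosC q m / (of_int (m - k) * of_int (- k))"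
    unfolding F_def S1_term_def using cosC_even[of q m] cosC_even[of q k] by (simp add: algebra_simps)
  have e3: "F (- m, k - m) = cosC q k * cosC q (m - k) * cosC q m / (of_int (- m) * of_int (k - m))"
  proof -
    have "cosC q (k - m) = cosC q (m - k)" using cosC_even[of q "m - k"] by simp
    thus ?thesis
      unfolding F_def S1_term_def using cosC_even[of q m] by (simp add: algebra_simps)
  qed
  define s where "s = cosC q k * cosC q (m - k) * cosC q m"
  have K: "(of_int k :: complex) \<noteq> 0" and Mn: "(of_int m :: complex) \<noteq> 0"
    and D: "(of_int m :: complex) - of_int k \<noteq> 0" using assms by auto
  have "s / (of_int k * of_int m) + s / (of_int (m - k) * of_int (- k)) + s / (of_int (- m) * of_int (k - m)) = 0"
    using K Mn D by (simp add: field_simps)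
  thus ?thesis using e1 e2 e3 unfolding s_def by simp
qed


theorem proposition1:
  fixes q :: "real \<Rightarrow> complex"
  assumes "q absolutely_integrable_on {0..pi}"
    and "cosC q 0 = 0"
    and "(\<lambda>n::nat. norm (cosC q (int n))) \<in> O(\<lambda>n. 1 / real n)"
  shows "(\<forall>n::nat. n > 0 \<longrightarrow> S1_term q summable_on S1_index n) \<and>
         (\<lambda>n::nat. norm (S1 q n)) \<in> O(\<lambda>n. 1 / (real n)^2)"
proof -
  obtain M where M0: "M \<ge> 0" and MB: "\<And>k. k \<noteq> 0 \<Longrightarrow> norm (cosC q k) \<le> M / \<bar>of_int k\<bar>"
    using coef_bound[OF assms(2,3)] by blast
  have MA: "norm (cosC q k) \<le> M" for k
  proof (cases "k = 0")
    case True thus ?thesis using assms(2) M0 by simp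
  next
    case False
    hence "norm (cosC q k) \<le> M / \<bar>of_int k\<bar>" by (rule MB)
    also have "\<dots> \<le> M"
    proof -
      have k1: "1 \<le> \<bar>real_of_int k\<bar>" using False by linarith
      show ?thesis using mult_left_mono[OF k1 M0] k1 by (simp add: divide_le_eq)
    qed
    finally show ?thesis .
  qed
  have MH: "norm (cosC q k) / \<bar>of_int k\<bar> \<le> M * hh k" if "k \<noteq> 0" for k
  proof -
    have "norm (cosC q k) / \<bar>of_int k\<bar> \<le> (M / \<bar>of_int k\<bar>) / \<bar>of_int k\<bar>"
      using MB[OF that] by (rule divide_right_mono) simp
    also have "\<dots> = M * hh k"
      by (simp add: hh_def power2_eq_square divide_divide_eq_left abs_mult_self_eq flip: abs_mult)
    finally show ?thesis .
  qed
  define X where "X = {k::int. k \<noteq> 0}"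
  define P where "P = X \<times> X"
  define F where "F = (\<lambda>p. S1_term q (fst p, snd p - fst p))"
  define G where "G = (\<lambda>p. M^3 * (hh (fst p) * hh (snd p)))"
  have Gnn: "G p \<ge> 0" for p unfolding G_def using M0 by (simp add: hh_nonneg)
  have GS: "G summable_on P" unfolding G_def P_def X_def
    by (rule summable_on_cmult_right[OF hh_prod_summable])
  have FG: "norm (F p) \<le> G p" if pP: "p \<in> P" for p
  proof -
    obtain k m where p: "p = (k, m)" and k: "k \<noteq> 0" and m: "m \<noteq> 0"
      using pP unfolding P_def X_def by (cases p) auto
    have "norm (F p) = (norm (cosC q k) / \<bar>of_int k\<bar>) * norm (cosC q (m - k)) * (norm (cosC q m) / \<bar>of_int m\<bar>)"
      unfolding F_def p using F_eq[OF assms(2), of k m]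
      by (simp add: norm_mult norm_divide)
    also have "\<dots> \<le> (M * hh k) * M * (M * hh m)"
      using MH[OF k] MH[OF m] MA[of "m - k"] M0
      by (intro mult_mono) (auto simp: hh_nonneg)
    also have "\<dots> = G p" unfolding G_def p by (simp add: power3_eq_cube)
    finally show ?thesis .
  qed
  have FabsS: "(\<lambda>p. norm (F p)) summable_on P"
    by (rule Infinite_Sum.abs_summable_on_comparison_test'[OF GS FG])
  have FS: "F summable_on P" by (rule abs_summable_summable[OF FabsS])
  define psi where "psi = (\<lambda>p::int\<times>int. (fst p, fst p + snd p))"
  have psi_inj: "inj_on psi B" for B unfolding psi_def by (auto simp: inj_on_def)
  have Fpsi: "F \<circ> psi = S1_term q" unfolding F_def psi_def by (auto simp: fun_eq_iff)
  define Pn where "Pn = (\<lambda>n::nat. (X - {- 2 * int n}) \<times> (X - {- 2 * int n}))"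
  have psi_img: "psi ` S1_index n = Pn n" for n
  proof
    show "psi ` S1_index n \<subseteq> Pn n" unfolding psi_def S1_index_def Pn_def X_def by auto
  next
    show "Pn n \<subseteq> psi ` S1_index n"
    proof
      fix p assume "p \<in> Pn n"
      then obtain k m where "p = (k, m)" "(k, m - k) \<in> S1_index n"
        unfolding Pn_def X_def S1_index_def by auto
      moreover have "psi (k, m - k) = (k, m)" unfolding psi_def by simp
      ultimately show "p \<in> psi ` S1_index n" by force
    qed
  qed
  have PnP: "Pn n \<subseteq> P" for n unfolding Pn_def P_def by auto
  have S1eq: "S1 q n = infsum F (Pn n)" for n
    unfolding S1_def using infsum_reindex[OF psi_inj, of F "S1_index n"] Fpsi psi_img by simp
  have summ: "S1_term q summable_on S1_index n" for n
    using summable_on_reindex[OF psi_inj, of F "S1_index n"] Fpsi psi_img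
      summable_on_subset_banach[OF FS PnP] by simp
  \<comment> \<open>the full sum vanishes\<close>
  define P' where "P' = {(k, m). k \<noteq> (0::int) \<and> m \<noteq> 0 \<and> m \<noteq> k}"
  define sg where "sg = (\<lambda>p::int\<times>int. (snd p - fst p, - fst p))"
  have sg3: "sg (sg (sg p)) = p" for p unfolding sg_def by auto
  have sgP: "sg p \<in> P'" if "p \<in> P'" for p using that unfolding sg_def P'_def by auto
  have bij1: "bij_betw sg P' P'"
    by (rule bij_betwI[where g = "\<lambda>p. sg (sg p)"]) (auto simp: sgP sg3)
  have bij2: "bij_betw (\<lambda>p. sg (sg p)) P' P'"
    by (rule bij_betwI[where g = sg]) (auto simp: sgP sg3)
  have P'P: "P' \<subseteq> P" unfolding P'_def P_def X_def by auto
  have FS': "F summable_on P'" by (rule summable_on_subset_banach[OF FS P'P])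
  have FS1: "(\<lambda>p. F (sg p)) summable_on P'" using summable_on_reindex_bij_betw[OF bij1, of F] FS' by simp
  have FS2: "(\<lambda>p. F (sg (sg p))) summable_on P'" using summable_on_reindex_bij_betw[OF bij2, of F] FS' by simp
  have T': "infsum F P' = infsum F P"
  proof (rule infsum_cong_neutral)
    fix p assume "p \<in> P - P'"
    then obtain k where "p = (k, k)" unfolding P_def P'_def X_def by auto
    thus "F p = 0" unfolding F_def S1_term_def using assms(2) by simp
  qed (use P'P in auto)
  have "0 = infsum (\<lambda>p. F p + F (sg p) + F (sg (sg p))) P'"
  proof -
    have "infsum (\<lambda>p. F p + F (sg p) + F (sg (sg p))) P' = infsum (\<lambda>p. 0) P'"
    proof (rule infsum_cong)
      fix p assume "p \<in> P'"
      then obtain k m where p: "p = (k, m)" "k \<noteq> 0" "m \<noteq> 0" "m \<noteq> k" unfolding P'_def by auto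
      show "F p + F (sg p) + F (sg (sg p)) = 0"
        using cyc_zero[OF p(2-4), of q] unfolding F_def sg_def p by (simp add: algebra_simps)
    qed
    thus ?thesis by simp
  qed
  also have "\<dots> = infsum F P' + infsum (\<lambda>p. F (sg p)) P' + infsum (\<lambda>p. F (sg (sg p))) P'"
    using FS' FS1 FS2 by (simp add: infsum_add summable_on_add)
  also have "\<dots> = 3 * infsum F P'"
    using infsum_reindex_bij_betw[OF bij1, of F] infsum_reindex_bij_betw[OF bij2, of F] by simp
  finally have T0: "infsum F P = 0" using T' by simp
  define Z where "Z = infsum hh X"
  have Z0: "Z \<ge> 0" unfolding Z_def by (rule infsum_nonneg) (simp add: hh_nonneg)
  have line1: "infsum G ({a} \<times> X) = M^3 * hh a * Z" for a
  proof -
    have "{a} \<times> X = (\<lambda>m. (a, m)) ` X" by auto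
    hence "infsum G ({a} \<times> X) = infsum (\<lambda>m. M^3 * hh a * hh m) X"
      by (simp add: infsum_reindex inj_on_def o_def G_def mult.assoc)
    also have "\<dots> = M^3 * hh a * Z" unfolding Z_def X_def
      by (rule infsum_cmult_right) (rule hh_summable)
    finally show ?thesis .
  qed
  have line2: "infsum G (X \<times> {a}) = M^3 * hh a * Z" for a
  proof -
    have "X \<times> {a} = (\<lambda>k. (k, a)) ` X" by auto
    hence "infsum G (X \<times> {a}) = infsum (\<lambda>m. M^3 * hh a * hh m) X"
      by (simp add: infsum_reindex inj_on_def o_def G_def mult_ac)
    also have "\<dots> = M^3 * hh a * Z" unfolding Z_def X_def
      by (rule infsum_cmult_right) (rule hh_summable)
    finally show ?thesis .
  qed
  have bound: "norm (S1 q n) \<le> (M^3 * Z / 2) * (1 / (real n)^2)" if n: "n > 0" for n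
  proof -
    define a where "a = - 2 * int n"
    have aX: "a \<in> X" unfolding a_def X_def using n by simp
    have D1: "{a} \<times> X \<subseteq> P" and D2: "X \<times> {a} \<subseteq> P" unfolding P_def using aX by auto
    have RP: "P - Pn n \<subseteq> P" by auto
    have "infsum F P = infsum F (Pn n) + infsum F (P - Pn n)"
      using infsum_Un_disjoint[OF summable_on_subset_banach[OF FS PnP] summable_on_subset_banach[OF FS RP]]
        PnP by (metis Diff_disjoint Un_Diff_cancel sup.absorb2)
    hence "S1 q n = - infsum F (P - Pn n)" using T0 S1eq by (simp add: eq_neg_iff_add_eq_0)
    hence "norm (S1 q n) = norm (infsum F (P - Pn n))" by simp
    also have "\<dots> \<le> infsum (\<lambda>p. norm (F p)) (P - Pn n)"
      by (rule norm_infsum_bound) (rule summable_on_subset_banach[OF FabsS RP])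
    also have "\<dots> \<le> infsum G (P - Pn n)"
      by (rule infsum_mono) (auto intro: summable_on_subset_banach[OF FabsS RP]
          summable_on_subset_banach[OF GS RP] FG)
    also have "\<dots> \<le> infsum G ({a} \<times> X \<union> (X \<times> {a} - {a} \<times> X))"
      by (rule infsum_mono_neutral)
        (use aX in \<open>auto simp: Gnn Pn_def a_def P_def intro!: summable_on_subset_banach[OF GS] D1 D2\<close>)
    also have "\<dots> = infsum G ({a} \<times> X) + infsum G (X \<times> {a} - {a} \<times> X)"
      by (rule infsum_Un_disjoint) (use aX in \<open>auto simp: P_def intro!: summable_on_subset_banach[OF GS]\<close>)
    also have "infsum G (X \<times> {a} - {a} \<times> X) \<le> infsum G (X \<times> {a})"
      by (rule infsum_mono_neutral) (use aX in \<open>auto simp: Gnn P_def intro!: summable_on_subset_banach[OF GS]\<close>)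
    hence "infsum G ({a} \<times> X) + infsum G (X \<times> {a} - {a} \<times> X) \<le> 2 * (M^3 * hh a * Z)"
      using line1[of a] line2[of a] by (simp add: mult_ac)
    also have "2 * (M^3 * hh a * Z) = (M^3 * Z / 2) * (1 / (real n)^2)"
      unfolding a_def hh_def by (simp add: power2_eq_square)
    finally show ?thesis by simp
  qed
  have "(\<lambda>n::nat. norm (S1 q n)) \<in> O(\<lambda>n. 1 / (real n)^2)"
  proof (rule bigoI)
    show "\<forall>\<^sub>F n in sequentially. norm (norm (S1 q n)) \<le> (M^3 * Z / 2) * norm (1 / (real n)^2)"
      using eventually_gt_at_top[of "0::nat"]
      by eventually_elim (use bound in simp)
  qed
  thus ?thesis using summ by blast
qed

end
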